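(* Let $(X,\|\cdot\|)$ be a real Banach space and let $K\subseteq X^*$ be a precisely norming set for $X$. Let $I,J$ be disjoint subsets of the integers (one of them possibly empty), and let $(K_n)_{n\in I\cup J}$ be weak$^*$ compact subsets of $K$ with $K=\bigcup_{n\in I\cup J}K_n$. Let $(C_i)_{i\in I}\subset(1,2)$ and $(\varepsilon_j)_{j\in J}\subset(0,1)$ be such that $C_i \searrow 1$ if $I$ is infinite and $\varepsilon_j\searrow 0$ if $J$ is infinite. Assume: (i) for every $i\in I$ there is a norm $\|\cdot\|_i$ on $X\mid K_i$ such that $\|y\|_\infty\le\|y\|_i\le C_i\|y\|_\infty$ for all $y\in X\mid K_i$, and the normed space $(X\mid K_i,\|\cdot\|_i)$ has a countable precisely norming set; (ii) for every $j\in J$ there is a finite set $A_j\subseteq K_j$ such that for every $x\in X$: if $\|x\|=\|x\mid K_j\|_\infty$, then $\|x\|\le\frac{1}{1-\varepsilon_j}\max_{a\in A_j}|a(x)|$. Then $X$ is isomorphically polyhedral.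
   Context: For a normed space $(Z,\|\cdot\|)$, a set $D\subseteq Z^*$ is precisely norming if $D\subseteq Ba(Z^* )$, $\|z\|=\sup_{d\in D}|d(z)|$ for all $z\in Z$, and for every $z\in Z$ there is $d_0\in D$ with $|d_0(z)|=\sup_{d\in D}|d(z)|$. For a weak$^*$ compact $L\subseteq X^*$, $C(L)$ denotes the continuous functions on $L$ (weak$^*$ topology) with the sup norm $\|\cdot\|_\infty$; for $x\in X$, $x\mid L\in C(L)$ is the function $\ell\mapsto \ell(x)$, and $X\mid L=\{x\mid L: x\in X\}$, a (possibly non-complete) normed subspace of $C(L)$. An infinite dimensional Banach space is polyhedral if the closed unit ball of each of its finite dimensional subspaces has finitely many extreme points; it is isomorphically polyhedral if it is polyhedral under some equivalent norm. *)

theory Defs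
  imports "HOL-Analysis.Analysis"
begin

text \<open>Elements of the dual X* are represented as real-valued linear functions on X;
  the weak* topology is the topology of pointwise convergence, i.e. the product
  topology on the function type 'a \<Rightarrow> real (HOL-Analysis Function_Topology).\<close>

definition precisely_norming_X :: "('a::real_normed_vector \<Rightarrow> real) set \<Rightarrow> bool" where
  "precisely_norming_X D \<longleftrightarrow>
     (\<forall>d\<in>D. linear d \<and> (\<forall>x. \<bar>d x\<bar> \<le> norm x)) \<and>
     (\<forall>x. \<exists>d0\<in>D. \<bar>d0 x\<bar> = norm x)"

definition restr :: "('a \<Rightarrow> real) set \<Rightarrow> 'a \<Rightarrow> (('a \<Rightarrow> real) \<Rightarrow> real)" where
  "restr L x = (\<lambda>l. if l \<in> L then l x else 0)"

definition XL :: "('a \<Rightarrow> real) set \<Rightarrow> (('a \<Rightarrow> real) \<Rightarrow> real) set" where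
  "XL L = range (restr L)"

definition supnorm :: "('a \<Rightarrow> real) set \<Rightarrow> (('a \<Rightarrow> real) \<Rightarrow> real) \<Rightarrow> real" where
  "supnorm L y = (if L = {} then 0 else (SUP l\<in>L. \<bar>y l\<bar>))"

definition norm_on_XL :: "('a \<Rightarrow> real) set \<Rightarrow> ((('a \<Rightarrow> real) \<Rightarrow> real) \<Rightarrow> real) \<Rightarrow> bool" where
  "norm_on_XL L N \<longleftrightarrow>
     (\<forall>y\<in>XL L. (N y = 0 \<longleftrightarrow> y = (\<lambda>_. 0))) \<and>
     (\<forall>y\<in>XL L. \<forall>c. N (\<lambda>l. c * y l) = \<bar>c\<bar> * N y) \<and>
     (\<forall>y\<in>XL L. \<forall>z\<in>XL L. N (\<lambda>l. y l + z l) \<le> N y + N z)"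

definition precisely_norming_XL ::
  "('a \<Rightarrow> real) set \<Rightarrow> ((('a \<Rightarrow> real) \<Rightarrow> real) \<Rightarrow> real)
     \<Rightarrow> ((('a \<Rightarrow> real) \<Rightarrow> real) \<Rightarrow> real) set \<Rightarrow> bool" where
  "precisely_norming_XL L N D \<longleftrightarrow>
     (\<forall>d\<in>D. (\<forall>y\<in>XL L. \<forall>z\<in>XL L. \<forall>a b. d (\<lambda>l. a * y l + b * z l) = a * d y + b * d z) \<and>
            (\<forall>y\<in>XL L. \<bar>d y\<bar> \<le> N y)) \<and>
     (\<forall>y\<in>XL L. \<exists>d0\<in>D. \<bar>d0 y\<bar> = N y)"

definition is_norm :: "('a::real_vector \<Rightarrow> real) \<Rightarrow> bool" where
  "is_norm N \<longleftrightarrow> (\<forall>x. N x = 0 \<longleftrightarrow> x = 0) \<and> (\<forall>x c. N (c *\<^sub>R x) = \<bar>c\<bar> * N x) \<and>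
                 (\<forall>x y. N (x + y) \<le> N x + N y)"

definition polyhedral_norm :: "('a::real_vector \<Rightarrow> real) \<Rightarrow> bool" where
  "polyhedral_norm N \<longleftrightarrow>
     (\<forall>Y. subspace Y \<and> (\<exists>B. finite B \<and> Y = span B) \<longrightarrow>
          finite {x. x extreme_point_of {y\<in>Y. N y \<le> 1}})"

definition isomorphically_polyhedral :: "'a::real_normed_vector itself \<Rightarrow> bool" where
  "isomorphically_polyhedral _ \<longleftrightarrow>
     (\<exists>N::'a \<Rightarrow> real. is_norm N \<and> (\<exists>c>0. \<exists>C>0. \<forall>x. c * norm x \<le> N x \<and> N x \<le> C * norm x) \<and>
        polyhedral_norm N)"

end

theory Submission
  imports Defs
begin


lemma closed_if_compact_cballs:
  fixes S :: "'a::real_normed_vector set"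
  assumes "\<And>R. compact (S \<inter> cball 0 R)"
  shows "closed S"
proof -
  have "closure S \<subseteq> S"
  proof
    fix x assume x: "x \<in> closure S"
    let ?B = "ball (0::'a) (norm x + 1)"
    have "x \<in> ?B \<inter> closure S" using x by auto
    also have "\<dots> \<subseteq> closure (?B \<inter> S)" by (rule open_Int_closure_subset) simp
    also have "\<dots> \<subseteq> closure (S \<inter> cball 0 (norm x + 1))"
      by (intro closure_mono) auto
    also have "\<dots> = S \<inter> cball 0 (norm x + 1)"
      using assms compact_imp_closed closure_closed by blast
    finally show "x \<in> S" by blast
  qed
  then show ?thesis using closure_subset_eq by blast
qed

lemma compact_span_cball:
  fixes B :: "'a::real_normed_vector set"
  assumes "finite B"
  shows "compact (span B \<inter> cball 0 R)"
  using assms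
proof (induction B arbitrary: R rule: finite_induct)
  case empty
  have "span {} \<inter> cball (0::'a) R \<subseteq> {0}" by auto
  then have "finite (span {} \<inter> cball (0::'a) R)" using finite_subset by blast
  then show ?case by (rule finite_imp_compact)
next
  case (insert b B)
  have clB: "closed (span B)" using insert.IH by (rule closed_if_compact_cballs)
  show ?case
  proof (cases "b \<in> span B")
    case True
    then show ?thesis using insert.IH span_redundant by metis
  next
    case False
    define \<delta> where "\<delta> = infdist b (span B)"
    have dpos: "\<delta> > 0" unfolding \<delta>_def
      using infdist_pos_not_in_closed[OF clB _ False] span_zero by blast
    define T where "T = max 0 R / \<delta>"
    define f where "f = (\<lambda>p::'a \<times> real. fst p + snd p *\<^sub>R b)"
    define P where "P = (span B \<inter> cball 0 (max 0 R + T * norm b)) \<times> {-T..T}"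
    have cP: "compact P" unfolding P_def using insert.IH by (intro compact_Times) auto
    have cf: "continuous_on P f" unfolding f_def by (intro continuous_intros)
    have eq: "span (insert b B) \<inter> cball 0 R = f ` P \<inter> cball 0 R"
    proof
      show "f ` P \<inter> cball 0 R \<subseteq> span (insert b B) \<inter> cball 0 R"
      proof
        fix y assume "y \<in> f ` P \<inter> cball 0 R"
        then obtain z t where y: "y = z + t *\<^sub>R b" "z \<in> span B" "norm y \<le> R"
          unfolding P_def f_def by auto
        have "z \<in> span (insert b B)" using y(2) span_mono[of B "insert b B"] by auto
        moreover have "b \<in> span (insert b B)" by (simp add: span_base)
        ultimately have "y \<in> span (insert b B)" using y(1) span_add span_scale by metis
        then show "y \<in> span (insert b B) \<inter> cball 0 R" using y by auto
      qed
    next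
      show "span (insert b B) \<inter> cball 0 R \<subseteq> f ` P \<inter> cball 0 R"
      proof
        fix y assume y: "y \<in> span (insert b B) \<inter> cball 0 R"
        then obtain t where t: "y - t *\<^sub>R b \<in> span B" using span_breakdown_eq by blast
        define z where "z = y - t *\<^sub>R b"
        have ny: "norm y \<le> R" using y by auto
        have tb: "\<bar>t\<bar> * \<delta> \<le> norm y"
        proof (cases "t = 0")
          case True then show ?thesis by simp
        next
          case False
          have "- (inverse t) *\<^sub>R z \<in> span B" using t z_def span_scale by blast
          then have "\<delta> \<le> dist b (- (inverse t) *\<^sub>R z)" unfolding \<delta>_def by (rule infdist_le)
          also have "\<dots> = norm (b + (inverse t) *\<^sub>R z)" by (simp add: dist_norm)
          also have "\<dots> = norm ((inverse t) *\<^sub>R y)" using False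
            by (simp add: z_def algebra_simps)
          also have "\<dots> = norm y / \<bar>t\<bar>" by (simp add: divide_inverse_commute)
          finally show ?thesis using False by (simp add: field_simps)
        qed
        have tT: "\<bar>t\<bar> \<le> T" unfolding T_def using tb ny dpos
          by (simp add: field_simps)
        have "norm z \<le> norm y + \<bar>t\<bar> * norm b" unfolding z_def
          using norm_triangle_ineq4[of y "t *\<^sub>R b"] by simp
        also have "\<dots> \<le> max 0 R + T * norm b" using ny tT
          by (intro add_mono mult_right_mono) auto
        finally have "(z, t) \<in> P" unfolding P_def using t z_def tT by auto
        moreover have "y = f (z, t)" unfolding f_def z_def by simp
        ultimately show "y \<in> f ` P \<inter> cball 0 R" using ny by auto
      qed
    qed
    show ?thesis unfolding eq
      using compact_continuous_image[OF cf cP] by (intro compact_Int_closed) auto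
  qed
qed



lemma finite_active_extreme:
  fixes h :: "'i \<Rightarrow> 'a::real_normed_vector \<Rightarrow> real" and N :: "'a \<Rightarrow> real"
  assumes Y: "subspace Y" and G: "finite G"
    and lin: "\<forall>l\<in>G. linear (h l)"
    and ball_eq: "\<forall>z\<in>Y. N z \<le> 1 \<longleftrightarrow> (\<forall>l\<in>G. \<bar>h l z\<bar> \<le> 1)"
  shows "finite {x. x extreme_point_of {y\<in>Y. N y \<le> 1}}"
proof -
  let ?E = "{x. x extreme_point_of {y\<in>Y. N y \<le> 1}}"
  define \<phi> where "\<phi> = (\<lambda>e. {(l, s). l \<in> G \<and> s \<in> {-1::real, 1} \<and> s * h l e = 1})"
  have inj: "inj_on \<phi> ?E"
  proof (rule inj_onI, rule ccontr)
    fix e e' assume e: "e \<in> ?E" and e': "e' \<in> ?E" and eq: "\<phi> e = \<phi> e'" and ne: "e \<noteq> e'"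
    have eY: "e \<in> Y" "\<forall>l\<in>G. \<bar>h l e\<bar> \<le> 1" using e ball_eq unfolding extreme_point_of_def by auto
    have eY': "e' \<in> Y" "\<forall>l\<in>G. \<bar>h l e'\<bar> \<le> 1" using e' ball_eq unfolding extreme_point_of_def by auto
    define v where "v = e' - e"
    have vY: "v \<in> Y" using eY eY' Y unfolding v_def by (simp add: subspace_diff)
    have hv: "h l v = h l e' - h l e" if "l \<in> G" for l
      using lin that unfolding v_def by (simp add: linear_diff)
    define Q where "Q = (\<lambda>l. (1 - \<bar>h l e\<bar>) / (\<bar>h l v\<bar> + 1)) ` {l\<in>G. \<bar>h l e\<bar> < 1}"
    define t where "t = Min (insert 1 Q)"
    have fQ: "finite Q" unfolding Q_def using G by simp
    have tpos: "t > 0" unfolding t_def using fQ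
      by (subst Min_gr_iff) (auto simp: Q_def intro!: divide_pos_pos)
    have tQ: "t \<le> (1 - \<bar>h l e\<bar>) / (\<bar>h l v\<bar> + 1)" if "l \<in> G" "\<bar>h l e\<bar> < 1" for l
      unfolding t_def using fQ that by (intro Min_le) (auto simp: Q_def)
    have inball: "e + u *\<^sub>R v \<in> {y\<in>Y. N y \<le> 1}" if u: "\<bar>u\<bar> \<le> t" for u
    proof -
      have "e + u *\<^sub>R v \<in> Y" using eY vY Y by (simp add: subspace_add subspace_scale)
      moreover have "\<bar>h l (e + u *\<^sub>R v)\<bar> \<le> 1" if l: "l \<in> G" for l
      proof -
        have hl: "h l (e + u *\<^sub>R v) = h l e + u * h l v"
          using lin l by (simp add: linear_add linear_scale)
        show ?thesis
        proof (cases "\<bar>h l e\<bar> < 1")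
          case True
          have "\<bar>u\<bar> * \<bar>h l v\<bar> \<le> t * (\<bar>h l v\<bar> + 1)" using u tpos
            by (intro mult_mono) auto
          also have "\<dots> \<le> 1 - \<bar>h l e\<bar>" using tQ[OF l True]
            by (simp add: pos_le_divide_eq)
          finally show ?thesis unfolding hl using abs_triangle_ineq[of "h l e" "u * h l v"]
            by (simp add: abs_mult)
        next
          case False
          then have a1: "\<bar>h l e\<bar> = 1" using eY l by force
          then obtain s where s: "s \<in> {-1::real, 1}" "s * h l e = 1"
            by (cases "h l e \<ge> 0") (auto intro: exI[of _ 1] exI[of _ "-1"])
          then have "(l, s) \<in> \<phi> e" unfolding \<phi>_def using l by auto
          then have "(l, s) \<in> \<phi> e'" using eq by simp
          then have "s * h l e' = 1" unfolding \<phi>_def by auto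
          then have "h l v = 0" using s hv[OF l] by auto
          then show ?thesis unfolding hl using a1 by simp
        qed
      qed
      ultimately show ?thesis using ball_eq by auto
    qed
    have "e = midpoint (e - t *\<^sub>R v) (e + t *\<^sub>R v)"
      by (simp add: midpoint_def algebra_simps flip: scaleR_add_left)
    moreover have "e - t *\<^sub>R v \<noteq> e + t *\<^sub>R v"
    proof
      assume a: "e - t *\<^sub>R v = e + t *\<^sub>R v"
      have "(e + t *\<^sub>R v) - (e - t *\<^sub>R v) = (2 * t) *\<^sub>R v" by (simp add: algebra_simps flip: scaleR_add_left)
      then have "(2 * t) *\<^sub>R v = 0" using a by simp
      then have "v = 0" using tpos by simp
      then show False using ne unfolding v_def by simp
    qed
    ultimately have "e \<in> open_segment (e - t *\<^sub>R v) (e + t *\<^sub>R v)"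
      by (metis midpoint_in_open_segment)
    moreover have "e - t *\<^sub>R v \<in> {y\<in>Y. N y \<le> 1}" using inball[of "-t"] tpos by simp
    moreover have "e + t *\<^sub>R v \<in> {y\<in>Y. N y \<le> 1}" using inball[of t] tpos by simp
    ultimately show False using e unfolding extreme_point_of_def by blast
  qed
  have "\<phi> ` ?E \<subseteq> Pow (G \<times> {-1, 1})" unfolding \<phi>_def by auto
  moreover have "finite (Pow (G \<times> {-1::real, 1}))" using G by simp
  ultimately have "finite (\<phi> ` ?E)" using finite_subset by blast
  then show ?thesis using inj finite_imageD by blast
qed



lemma abstract_poly:
  fixes h :: "'i \<Rightarrow> 'a::real_normed_vector \<Rightarrow> real" and L :: "'i set"
  assumes Lne: "L \<noteq> {}"
    and lin: "\<forall>l\<in>L. linear (h l)"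
    and Mpos: "M > 0" and Mb: "\<forall>l\<in>L. \<forall>x. \<bar>h l x\<bar> \<le> M * norm x"
    and low: "\<forall>x. norm x \<le> (SUP l\<in>L. \<bar>h l x\<bar>)"
    and loc: "\<forall>x. x \<noteq> 0 \<longrightarrow> (\<exists>r>0. \<exists>F. finite F \<and>
               (\<forall>y\<in>ball x r. \<exists>c < (SUP l\<in>L. \<bar>h l y\<bar>). \<forall>l\<in>L-F. \<bar>h l y\<bar> \<le> c))"
  shows "isomorphically_polyhedral TYPE('a)"
proof -
  define N where "N = (\<lambda>x. SUP l\<in>L. \<bar>h l x\<bar>)"
  have bdd: "bdd_above ((\<lambda>l. \<bar>h l x\<bar>) ` L)" for x
    using Mb by (intro bdd_aboveI2[of _ _ "M * norm x"]) auto
  have Nup: "\<bar>h l x\<bar> \<le> N x" if "l \<in> L" for l x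
    unfolding N_def using that bdd by (rule cSUP_upper)
  have Nle: "N x \<le> c" if "\<And>l. l \<in> L \<Longrightarrow> \<bar>h l x\<bar> \<le> c" for x c
    unfolding N_def using Lne that by (rule cSUP_least)
  have Nlow: "norm x \<le> N x" for x using low unfolding N_def by auto
  have NM: "N x \<le> M * norm x" for x using Mb by (intro Nle) auto
  have N0: "N 0 = 0"
  proof -
    have "N 0 \<le> 0" using lin by (intro Nle) (simp add: linear_0)
    moreover have "0 \<le> N 0" using Nlow[of 0] by simp
    ultimately show ?thesis by simp
  qed
  have Nscale: "N (c *\<^sub>R x) = \<bar>c\<bar> * N x" for c x
  proof (cases "c = 0")
    case True then show ?thesis using N0 by simp
  next
    case False
    have "N (c *\<^sub>R x) \<le> \<bar>c\<bar> * N x"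
      using lin Nup by (intro Nle) (auto simp: linear_scale abs_mult intro: mult_left_mono)
    moreover have "\<bar>c\<bar> * N x \<le> N (c *\<^sub>R x)"
    proof -
      have "N x \<le> N (c *\<^sub>R x) / \<bar>c\<bar>"
      proof (rule Nle)
        fix l assume l: "l \<in> L"
        have "\<bar>c\<bar> * \<bar>h l x\<bar> = \<bar>h l (c *\<^sub>R x)\<bar>" using lin l by (simp add: linear_scale abs_mult)
        also have "\<dots> \<le> N (c *\<^sub>R x)" using Nup l by blast
        finally show "\<bar>h l x\<bar> \<le> N (c *\<^sub>R x) / \<bar>c\<bar>" using False
          by (simp add: pos_le_divide_eq mult.commute)
      qed
      then show ?thesis using False by (simp add: pos_le_divide_eq mult.commute)
    qed
    ultimately show ?thesis by simp
  qed
  have Ntri: "N (x + y) \<le> N x + N y" for x y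
  proof (rule Nle)
    fix l assume l: "l \<in> L"
    have "\<bar>h l (x + y)\<bar> \<le> \<bar>h l x\<bar> + \<bar>h l y\<bar>" using lin l by (simp add: linear_add abs_triangle_ineq)
    also have "\<dots> \<le> N x + N y" using Nup l by (intro add_mono) auto
    finally show "\<bar>h l (x + y)\<bar> \<le> N x + N y" .
  qed
  have isn: "is_norm N" unfolding is_norm_def
  proof (intro conjI allI)
    fix x show "N x = 0 \<longleftrightarrow> x = 0" using N0 Nlow[of x] by (auto simp del: norm_le_zero_iff) (metis norm_le_zero_iff)
  qed (auto simp: Nscale Ntri)
  have poly: "polyhedral_norm N" unfolding polyhedral_norm_def
  proof (intro allI impI)
    fix Y :: "'a set" assume "subspace Y \<and> (\<exists>B. finite B \<and> Y = span B)"
    then obtain B :: "'a set" where Y: "subspace Y" and B: "finite B" "Y = span B" by blast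
    define S where "S = span B \<inter> sphere 0 1"
    have cS: "compact S" unfolding S_def
    proof -
      have eqS: "span B \<inter> sphere 0 1 = (span B \<inter> cball 0 1) \<inter> sphere (0::'a) 1" by auto
      have "sphere (0::'a) 1 = {x. norm x = 1}" by auto
      then have clsph: "closed (sphere (0::'a) 1)"
        by (simp add: closed_Collect_eq continuous_on_norm_id continuous_on_const)
      have "compact ((span B \<inter> cball 0 1) \<inter> sphere (0::'a) 1)"
        using compact_span_cball[OF B(1), of 1] clsph by (rule compact_Int_closed)
      then show "compact (span B \<inter> sphere 0 1)" using eqS by simp
    qed
    have "\<forall>x\<in>S. \<exists>r>0. \<exists>F. finite F \<and> (\<forall>y\<in>ball x r. \<exists>c < N y. \<forall>l\<in>L-F. \<bar>h l y\<bar> \<le> c)"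
    proof
      fix x assume "x \<in> S"
      then have "x \<noteq> 0" unfolding S_def by auto
      then show "\<exists>r>0. \<exists>F. finite F \<and> (\<forall>y\<in>ball x r. \<exists>c < N y. \<forall>l\<in>L-F. \<bar>h l y\<bar> \<le> c)"
        using loc unfolding N_def by blast
    qed
    then obtain rr FF where rF: "\<forall>x\<in>S. rr x > 0 \<and> finite (FF x) \<and>
        (\<forall>y\<in>ball x (rr x). \<exists>c < N y. \<forall>l\<in>L - FF x. \<bar>h l y\<bar> \<le> c)"
      by metis
    have "S \<subseteq> (\<Union>x\<in>S. ball x (rr x))" using rF by auto
    then obtain D where D: "D \<subseteq> S" "finite D" "S \<subseteq> (\<Union>x\<in>D. ball x (rr x))"
      using compactE_image[OF cS, of S "\<lambda>x. ball x (rr x)"] by auto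
    define G where "G = L \<inter> (\<Union>x\<in>D. FF x)"
    have "finite (\<Union>x\<in>D. FF x)" using D rF by blast
    then have fG: "finite G" unfolding G_def by simp
    have actS: "\<exists>l\<in>G. N y \<le> \<bar>h l y\<bar>" if y: "y \<in> S" for y
    proof (rule ccontr)
      assume na: "\<not> ?thesis"
      obtain x where x: "x \<in> D" "y \<in> ball x (rr x)" using D y by auto
      then obtain c where c: "c < N y" "\<forall>l\<in>L - FF x. \<bar>h l y\<bar> \<le> c" using rF D by blast
      define m where "m = Max (insert c ((\<lambda>l. \<bar>h l y\<bar>) ` G))"
      have "m < N y" unfolding m_def using fG c na by (subst Max_less_iff) auto
      moreover have "N y \<le> m"
      proof (rule Nle)
        fix l assume l: "l \<in> L"
        show "\<bar>h l y\<bar> \<le> m"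
        proof (cases "l \<in> FF x")
          case True
          then have "l \<in> G" unfolding G_def using l x by auto
          then show ?thesis unfolding m_def using fG by (intro Max_ge) auto
        next
          case False
          then have "\<bar>h l y\<bar> \<le> c" using c l by auto
          also have "c \<le> m" unfolding m_def using fG by (intro Max_ge) auto
          finally show ?thesis .
        qed
      qed
      ultimately show False by simp
    qed
    have act: "\<exists>l\<in>G. N z \<le> \<bar>h l z\<bar>" if z: "z \<in> Y" "z \<noteq> 0" for z
    proof -
      define y where "y = (1 / norm z) *\<^sub>R z"
      have "y \<in> S" unfolding S_def y_def using z B Y by (auto simp: subspace_scale)
      then obtain l where l: "l \<in> G" "N y \<le> \<bar>h l y\<bar>" using actS by blast
      have lL: "l \<in> L" using l G_def by auto
      have "N y = N z / norm z" unfolding y_def Nscale by simp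
      moreover have "\<bar>h l y\<bar> = \<bar>h l z\<bar> / norm z" unfolding y_def using lin lL
        by (simp add: linear_scale abs_mult)
      ultimately have "N z / norm z \<le> \<bar>h l z\<bar> / norm z" using l by simp
      then have "N z \<le> \<bar>h l z\<bar>" using z by (simp add: divide_right_mono_neg divide_le_cancel)
      then show ?thesis using l by blast
    qed
    have ball_eq: "\<forall>z\<in>Y. N z \<le> 1 \<longleftrightarrow> (\<forall>l\<in>G. \<bar>h l z\<bar> \<le> 1)"
    proof (rule ballI, rule iffI)
      fix z assume "z \<in> Y" "N z \<le> 1"
      then show "\<forall>l\<in>G. \<bar>h l z\<bar> \<le> 1" using Nup G_def by (meson IntD1 order_trans)
    next
      fix z assume z: "z \<in> Y" and a: "\<forall>l\<in>G. \<bar>h l z\<bar> \<le> 1"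
      show "N z \<le> 1"
      proof (cases "z = 0")
        case True then show ?thesis using N0 by simp
      next
        case False then show ?thesis using act[OF z False] a by force
      qed
    qed
    show "finite {x. x extreme_point_of {y\<in>Y. N y \<le> 1}}"
    proof (rule finite_active_extreme[of Y G h])
      show "\<forall>l\<in>G. linear (h l)" using lin G_def by auto
    qed (use Y fG ball_eq in auto)
  qed
  show ?thesis unfolding isomorphically_polyhedral_def
  proof (intro exI[of _ N] conjI)
    show "\<exists>c>0. \<exists>C>0. \<forall>x. c * norm x \<le> N x \<and> N x \<le> C * norm x"
      using Nlow NM Mpos by (intro exI[of _ 1] conjI exI[of _ M]) auto
  qed (use isn poly in auto)
qed



lemma supnorm_restr_le:
  fixes x :: "'a::real_normed_vector"
  assumes "\<forall>d\<in>L. \<bar>d x\<bar> \<le> norm x"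
  shows "supnorm L (restr L x) \<le> norm x"
  unfolding supnorm_def restr_def using assms
  by (auto intro!: cSUP_least)

lemma supnorm_restr_ge:
  fixes x :: "'a::real_normed_vector"
  assumes "\<forall>d\<in>L. \<bar>d x\<bar> \<le> norm x" "k \<in> L"
  shows "\<bar>k x\<bar> \<le> supnorm L (restr L x)"
proof -
  have bdd: "bdd_above ((\<lambda>l. \<bar>restr L x l\<bar>) ` L)"
    using assms(1) by (intro bdd_aboveI2[of _ _ "norm x"]) (auto simp: restr_def)
  have "\<bar>restr L x k\<bar> \<le> (SUP l\<in>L. \<bar>restr L x l\<bar>)" using assms(2) bdd by (rule cSUP_upper)
  then show ?thesis using assms(2) unfolding supnorm_def by (auto simp: restr_def)
qed

lemma restr_comb:
  assumes "\<forall>d\<in>L. linear d"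
  shows "restr L (a *\<^sub>R x + b *\<^sub>R y) = (\<lambda>l. a * restr L x l + b * restr L y l)"
  using assms by (auto simp: restr_def linear_add linear_scale)

lemma trivial_poly:
  assumes "\<forall>x::'a::real_normed_vector. x = 0"
  shows "isomorphically_polyhedral TYPE('a)"
  unfolding isomorphically_polyhedral_def
proof (intro exI[of _ norm] conjI)
  show "is_norm (norm :: 'a \<Rightarrow> real)" unfolding is_norm_def by (auto simp: norm_triangle_ineq)
  show "\<exists>c>0. \<exists>C>0. \<forall>x::'a. c * norm x \<le> norm x \<and> norm x \<le> C * norm x"
    by (intro exI[of _ 1] conjI) auto
  show "polyhedral_norm (norm :: 'a \<Rightarrow> real)" unfolding polyhedral_norm_def
  proof (intro allI impI)
    fix Y :: "'a set"
    have "{x. x extreme_point_of {y\<in>Y. norm y \<le> 1}} \<subseteq> {0}" using assms by auto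
    then show "finite {x. x extreme_point_of {y\<in>Y. norm y \<le> 1}}" using finite_subset by blast
  qed
qed



lemma linear_mult_const:
  fixes f :: "'a::real_vector \<Rightarrow> real"
  assumes "linear f" shows "linear (\<lambda>x. c * f x)"
  using assms by (auto simp: linear_iff algebra_simps)

theorem lemma2p3:
  fixes K :: "('a::banach \<Rightarrow> real) set"
    and I J :: "int set"
    and Kn :: "int \<Rightarrow> ('a \<Rightarrow> real) set"
    and C eps :: "int \<Rightarrow> real"
  assumes K_pn: "precisely_norming_X K"
    and disj: "I \<inter> J = {}"
    and Kn_sub: "\<forall>n\<in>I \<union> J. Kn n \<subseteq> K"
    and Kn_cpt: "\<forall>n\<in>I \<union> J. compact (Kn n)"
    and K_union: "K = (\<Union>n\<in>I \<union> J. Kn n)"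
    and C_range: "\<forall>i\<in>I. 1 < C i \<and> C i < 2"
    and eps_range: "\<forall>j\<in>J. 0 < eps j \<and> eps j < 1"
    and C_lim: "infinite I \<longrightarrow>
        (\<forall>i\<in>I. \<forall>i'\<in>I. i \<le> i' \<longrightarrow> C i' \<le> C i) \<and> (\<forall>e>0. finite {i\<in>I. C i \<ge> 1 + e})"
    and eps_lim: "infinite J \<longrightarrow>
        (\<forall>j\<in>J. \<forall>j'\<in>J. j \<le> j' \<longrightarrow> eps j' \<le> eps j) \<and> (\<forall>e>0. finite {j\<in>J. eps j \<ge> e})"
    and hyp_i: "\<forall>i\<in>I. \<exists>N. norm_on_XL (Kn i) N \<and>
        (\<forall>y\<in>XL (Kn i). supnorm (Kn i) y \<le> N y \<and> N y \<le> C i * supnorm (Kn i) y) \<and>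
        (\<exists>D. countable D \<and> precisely_norming_XL (Kn i) N D)"
    and hyp_j: "\<forall>j\<in>J. \<exists>A. finite A \<and> A \<subseteq> Kn j \<and>
        (\<forall>x. norm x = supnorm (Kn j) (restr (Kn j) x) \<longrightarrow>
             norm x \<le> 1 / (1 - eps j) * Max (insert 0 ((\<lambda>a. \<bar>a x\<bar>) ` A)))"
  shows "isomorphically_polyhedral TYPE('a)"
proof (cases "\<forall>x::'a. x = 0")
  case True then show ?thesis by (rule trivial_poly)
next
  case False
  then obtain x1 :: 'a where x1: "x1 \<noteq> 0" by blast
  have Klin: "\<forall>d\<in>K. linear d" and Kbd: "\<forall>d\<in>K. \<forall>x. \<bar>d x\<bar> \<le> norm x"
    and Katt: "\<forall>x. \<exists>d0\<in>K. \<bar>d0 x\<bar> = norm x"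
    using K_pn unfolding precisely_norming_X_def by auto
  have Knlin: "\<forall>d\<in>Kn n. linear d" and Knbd: "\<forall>d\<in>Kn n. \<bar>d x\<bar> \<le> norm x"
    if "n \<in> I \<union> J" for n x using Kn_sub that Klin Kbd by blast+
  have "\<forall>i\<in>I. \<exists>ND. norm_on_XL (Kn i) (fst ND) \<and>
        (\<forall>y\<in>XL (Kn i). supnorm (Kn i) y \<le> fst ND y \<and> fst ND y \<le> C i * supnorm (Kn i) y) \<and>
        countable (snd ND) \<and> precisely_norming_XL (Kn i) (fst ND) (snd ND)"
    using hyp_i by fastforce
  then obtain ND where ND: "\<forall>i\<in>I. norm_on_XL (Kn i) (fst (ND i)) \<and>
        (\<forall>y\<in>XL (Kn i). supnorm (Kn i) y \<le> fst (ND i) y \<and> fst (ND i) y \<le> C i * supnorm (Kn i) y) \<and>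
        countable (snd (ND i)) \<and> precisely_norming_XL (Kn i) (fst (ND i)) (snd (ND i))"
    by metis
  define NN where "NN i = fst (ND i)" for i
  define DD where "DD i = snd (ND i)" for i
  obtain AA where AA: "\<forall>j\<in>J. finite (AA j) \<and> AA j \<subseteq> Kn j \<and>
        (\<forall>x. norm x = supnorm (Kn j) (restr (Kn j) x) \<longrightarrow>
             norm x \<le> 1 / (1 - eps j) * Max (insert 0 ((\<lambda>a. \<bar>a x\<bar>) ` AA j)))"
    using hyp_j by metis
  define dd where "dd i m = from_nat_into (DD i) m" for i m
  define p where "p i x = NN i (restr (Kn i) x)" for i x
  have restr_XL: "restr L x \<in> XL L" for L and x :: 'a unfolding XL_def by simp
  have DDne: "DD i \<noteq> {}" if "i \<in> I" for i
    using ND that restr_XL unfolding precisely_norming_XL_def DD_def by blast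
  have dd_in: "dd i m \<in> DD i" if "i \<in> I" for i m unfolding dd_def using DDne[OF that] by (rule from_nat_into)
  have dd_range: "\<exists>m. dd i m = d" if "i \<in> I" "d \<in> DD i" for i d
    using range_from_nat_into[OF DDne[OF that(1)]] ND that unfolding dd_def DD_def by (metis rangeE)
  have F1: "\<bar>dd i m (restr (Kn i) x)\<bar> \<le> p i x" if "i \<in> I" for i m x
    using ND that dd_in[OF that] restr_XL unfolding precisely_norming_XL_def p_def NN_def DD_def by blast
  have F2: "\<exists>m. \<bar>dd i m (restr (Kn i) x)\<bar> = p i x" if iI: "i \<in> I" for i x
  proof -
    obtain d where "d \<in> DD i" "\<bar>d (restr (Kn i) x)\<bar> = p i x"
      using ND iI restr_XL unfolding precisely_norming_XL_def p_def NN_def DD_def by blast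
    then show ?thesis using dd_range[OF iI] by metis
  qed
  have F3a: "supnorm (Kn i) (restr (Kn i) x) \<le> p i x" if "i \<in> I" for i x
    using ND that restr_XL unfolding p_def NN_def by blast
  have F3b: "p i x \<le> C i * norm x" if "i \<in> I" for i x
  proof -
    have "p i x \<le> C i * supnorm (Kn i) (restr (Kn i) x)"
      using ND that restr_XL unfolding p_def NN_def by blast
    also have "\<dots> \<le> C i * norm x" using C_range that supnorm_restr_le[OF Knbd] 
      by (intro mult_left_mono) auto
    finally show ?thesis .
  qed
  have F4: "linear (\<lambda>x. dd i m (restr (Kn i) x))" if "i \<in> I" for i m
  proof -
    have dl: "\<forall>y\<in>XL (Kn i). \<forall>z\<in>XL (Kn i). \<forall>a b. dd i m (\<lambda>l. a * y l + b * z l) = a * dd i m y + b * dd i m z"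
      using ND that dd_in[OF that] unfolding precisely_norming_XL_def DD_def by blast
    have rc: "restr (Kn i) (a *\<^sub>R x + b *\<^sub>R y) = (\<lambda>l. a * restr (Kn i) x l + b * restr (Kn i) y l)" for a b x y
      using Knlin that by (intro restr_comb) auto
    show ?thesis
    proof (rule linearI)
      fix x y :: 'a
      have "dd i m (restr (Kn i) (1 *\<^sub>R x + 1 *\<^sub>R y)) = 1 * dd i m (restr (Kn i) x) + 1 * dd i m (restr (Kn i) y)"
        unfolding rc using dl restr_XL by blast
      then show "dd i m (restr (Kn i) (x + y)) = dd i m (restr (Kn i) x) + dd i m (restr (Kn i) y)" by simp
    next
      fix c and x :: 'a
      have "dd i m (restr (Kn i) (c *\<^sub>R x + 0 *\<^sub>R x)) = c * dd i m (restr (Kn i) x) + 0 * dd i m (restr (Kn i) x)"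
        unfolding rc using dl restr_XL by blast
      then show "dd i m (restr (Kn i) (c *\<^sub>R x)) = c *\<^sub>R dd i m (restr (Kn i) x)" by simp
    qed
  qed
  define w where "w i m = C i + (C i - 1) * (1/2::real) ^ m" for i m
  have w_gt: "C i < w i m" if "i \<in> I" for i m using C_range that unfolding w_def by auto
  have w_le: "w i m \<le> 2 * C i - 1" if "i \<in> I" for i m
  proof -
    have "(C i - 1) * (1/2::real) ^ m \<le> (C i - 1) * 1" using C_range that
      by (intro mult_left_mono) (auto simp: power_le_one)
    then show ?thesis unfolding w_def by simp
  qed
  have wC8: "w i m * C i \<le> 8" if "i \<in> I" for i m
  proof -
    have c: "1 < C i" "C i < 2" using C_range that by auto
    have "w i m \<le> 4" using w_le[of i m] c that by linarith
    then have "w i m * C i \<le> 4 * 2" using w_gt[OF that] c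
      by (intro mult_mono) auto
    then show ?thesis by simp
  qed
  obtain e0 where e0: "e0 < 1" "\<forall>j\<in>J. eps j \<le> e0"
  proof -
    have fT: "finite {j\<in>J. eps j \<ge> 1/2}"
    proof (cases "finite J")
      case True then show ?thesis by simp
    next
      case False then show ?thesis using eps_lim by (metis (no_types) half_gt_zero zero_less_one)
    qed
    define e where "e = Max (insert (1/2) (eps ` {j\<in>J. eps j \<ge> 1/2}))"
    have "e < 1" unfolding e_def using fT eps_range by (subst Max_less_iff) auto
    moreover have "eps j \<le> e" if "j \<in> J" for j
    proof (cases "eps j \<ge> 1/2")
      case True then show ?thesis unfolding e_def using fT that by (intro Max_ge) auto
    next
      case False
      then have "eps j \<le> 1/2" by simp
      also have "1/2 \<le> e" unfolding e_def using fT by (intro Max_ge) auto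
      finally show ?thesis .
    qed
    ultimately show ?thesis using that by blast
  qed
  define M where "M = max 8 ((1 + e0) / (1 - e0))"
  have Mpos: "M > 0" unfolding M_def by simp
  have ratio_mono: "(1 + eps j) / (1 - eps j) \<le> (1 + e0) / (1 - e0)" if "j \<in> J" for j
    using eps_range[rule_format, OF that] e0(2)[rule_format, OF that] e0(1) by (intro frac_le) auto
  define h :: "(int \<times> nat) + (int \<times> ('a \<Rightarrow> real)) \<Rightarrow> 'a \<Rightarrow> real" where
    "h = case_sum (\<lambda>(i, m) x. w i m * dd i m (restr (Kn i) x))
                  (\<lambda>(j, a) x. (1 + eps j) / (1 - eps j) * a x)"
  define L where "L = Inl ` (I \<times> (UNIV :: nat set)) \<union> Inr ` (SIGMA j:J. AA j)"
  have hInl: "h (Inl (i, m)) x = w i m * dd i m (restr (Kn i) x)" for i m x unfolding h_def by simp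
  have hInr: "h (Inr (j, a)) x = (1 + eps j) / (1 - eps j) * a x" for j a x unfolding h_def by simp
  have AAK: "a \<in> Kn j" "a \<in> K" if "j \<in> J" "a \<in> AA j" for j a
    using AA Kn_sub that by blast+
  have lin: "\<forall>l\<in>L. linear (h l)"
  proof
    fix l assume "l \<in> L"
    then consider (A) i m where "l = Inl (i, m)" "i \<in> I" | (B) j a where "l = Inr (j, a)" "j \<in> J" "a \<in> AA j"
      unfolding L_def by auto
    then show "linear (h l)"
    proof cases
      case A then show ?thesis unfolding A(1) hInl using F4[OF A(2)] by (intro linear_mult_const)
    next
      case B then show ?thesis unfolding B(1) hInr using AAK[OF B(2,3)] Klin
        by (intro linear_mult_const) auto
    qed
  qed
  have Mb: "\<forall>l\<in>L. \<forall>x. \<bar>h l x\<bar> \<le> M * norm x"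
  proof (intro ballI allI)
    fix l x assume "l \<in> L"
    then consider (A) i m where "l = Inl (i, m)" "i \<in> I" | (B) j a where "l = Inr (j, a)" "j \<in> J" "a \<in> AA j"
      unfolding L_def by auto
    then show "\<bar>h l x\<bar> \<le> M * norm x"
    proof cases
      case A
      have wpos: "w i m > 0" using w_gt[OF A(2), of m] C_range A(2) by force
      have "\<bar>h l x\<bar> = w i m * \<bar>dd i m (restr (Kn i) x)\<bar>" using A wpos by (simp add: hInl abs_mult)
      also have "\<dots> \<le> w i m * (C i * norm x)" using F1[OF A(2)] F3b[OF A(2)] wpos
        by (intro mult_left_mono) (auto intro: order_trans)
      also have "\<dots> = (w i m * C i) * norm x" by simp
      also have "\<dots> \<le> M * norm x" using wC8[OF A(2), of m] unfolding M_def
        by (intro mult_right_mono) auto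
      finally show ?thesis .
    next
      case B
      have rpos: "(1 + eps j) / (1 - eps j) > 0" using eps_range B(2) by auto
      have "\<bar>h l x\<bar> = (1 + eps j) / (1 - eps j) * \<bar>a x\<bar>" unfolding B(1) hInr abs_mult using abs_of_pos[OF rpos] by metis
      also have "\<dots> \<le> M * norm x" using ratio_mono[OF B(2)] Kbd AAK[OF B(2,3)] rpos unfolding M_def
        by (intro mult_mono) auto
      finally show ?thesis .
    qed
  qed
  have att: "\<exists>l\<in>L. norm x < \<bar>h l x\<bar>" if x0: "x \<noteq> 0" for x
  proof -
    obtain k where k: "k \<in> K" "\<bar>k x\<bar> = norm x" using Katt by blast
    then obtain n0 where n0: "n0 \<in> I \<union> J" "k \<in> Kn n0" using K_union by blast
    have nxpos: "norm x > 0" using x0 by simp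
    have sn: "norm x \<le> supnorm (Kn n0) (restr (Kn n0) x)"
      using supnorm_restr_ge[OF Knbd[of n0 x, OF n0(1)] n0(2)] k(2) by simp
    show ?thesis
    proof (cases "n0 \<in> I")
      case True
      obtain m where m: "\<bar>dd n0 m (restr (Kn n0) x)\<bar> = p n0 x" using F2[OF True] by blast
      have px: "norm x \<le> p n0 x" using sn F3a[OF True, of x] by linarith
      have w1: "1 < w n0 m" using w_gt[OF True, of m] C_range True by force
      have "\<bar>h (Inl (n0, m)) x\<bar> = w n0 m * p n0 x" unfolding hInl abs_mult m using w1 by simp
      moreover have "p n0 x < w n0 m * p n0 x"
      proof -
        have "0 < p n0 x" using px nxpos by linarith
        then have "1 * p n0 x < w n0 m * p n0 x" using w1 by (intro mult_strict_right_mono)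
        then show ?thesis by simp
      qed
      ultimately have "norm x < \<bar>h (Inl (n0, m)) x\<bar>" using px by linarith
      moreover have "Inl (n0, m) \<in> L" unfolding L_def using True by auto
      ultimately show ?thesis by blast
    next
      case False
      then have jJ: "n0 \<in> J" using n0 by auto
      have "supnorm (Kn n0) (restr (Kn n0) x) \<le> norm x" using supnorm_restr_le[OF Knbd[of n0 x, OF n0(1)]] .
      then have eqn: "norm x = supnorm (Kn n0) (restr (Kn n0) x)" using sn by linarith
      define Mx where "Mx = Max (insert 0 ((\<lambda>a. \<bar>a x\<bar>) ` AA n0))"
      have le: "norm x \<le> 1 / (1 - eps n0) * Mx" using AA jJ eqn unfolding Mx_def by blast
      have fin: "finite (AA n0)" using AA jJ by blast
      have "Mx \<in> insert 0 ((\<lambda>a. \<bar>a x\<bar>) ` AA n0)" unfolding Mx_def using fin by (intro Max_in) auto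
      moreover have "Mx \<noteq> 0" using le nxpos by auto
      ultimately obtain a where a: "a \<in> AA n0" "Mx = \<bar>a x\<bar>" by auto
      have e: "0 < eps n0" "eps n0 < 1" using eps_range jJ by auto
      have "norm x \<le> \<bar>a x\<bar> / (1 - eps n0)" using le a by simp
      then have "(1 + eps n0) * norm x \<le> (1 + eps n0) * (\<bar>a x\<bar> / (1 - eps n0))"
        using e by (intro mult_left_mono) auto
      moreover have "\<bar>h (Inr (n0, a)) x\<bar> = (1 + eps n0) * (\<bar>a x\<bar> / (1 - eps n0))"
        unfolding hInr abs_mult using e by simp
      moreover have "norm x < (1 + eps n0) * norm x" using e nxpos by simp
      ultimately have "norm x < \<bar>h (Inr (n0, a)) x\<bar>" by linarith
      moreover have "Inr (n0, a) \<in> L" unfolding L_def using jJ a by auto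
      ultimately show ?thesis by blast
    qed
  qed
  have Lne: "L \<noteq> {}" using att[OF x1] by blast
  define N where "N x = (SUP l\<in>L. \<bar>h l x\<bar>)" for x
  have bdd: "bdd_above ((\<lambda>l. \<bar>h l x\<bar>) ` L)" for x
    using Mb by (intro bdd_aboveI2[of _ _ "M * norm x"]) auto
  have Nup: "\<bar>h l x\<bar> \<le> N x" if "l \<in> L" for l x
    unfolding N_def using that bdd by (rule cSUP_upper)
  have Nle: "N x \<le> c" if "\<And>l. l \<in> L \<Longrightarrow> \<bar>h l x\<bar> \<le> c" for x c
    unfolding N_def using Lne that by (rule cSUP_least)
  have low: "\<forall>x. norm x \<le> N x"
  proof
    fix x :: 'a
    show "norm x \<le> N x"
    proof (cases "x = 0")
      case True
      obtain l where "l \<in> L" using Lne by blast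
      then show ?thesis using Nup[of l x] True by simp
    next
      case False
      then obtain l where "l \<in> L" "norm x < \<bar>h l x\<bar>" using att by blast
      then show ?thesis using Nup[of l x] by simp
    qed
  qed
  have Nlip: "N x \<le> N y + M * norm (x - y)" for x y
  proof (rule Nle)
    fix l assume l: "l \<in> L"
    have "h l x = h l y + h l (x - y)" using lin l by (simp add: linear_diff)
    then have "\<bar>h l x\<bar> \<le> \<bar>h l y\<bar> + \<bar>h l (x - y)\<bar>" by simp
    also have "\<dots> \<le> N y + M * norm (x - y)" using Nup[OF l] Mb l by (intro add_mono) auto
    finally show "\<bar>h l x\<bar> \<le> N y + M * norm (x - y)" .
  qed
  have loc: "\<forall>x. x \<noteq> 0 \<longrightarrow> (\<exists>r>0. \<exists>F. finite F \<and>
               (\<forall>y\<in>ball x r. \<exists>c < N y. \<forall>l\<in>L-F. \<bar>h l y\<bar> \<le> c))"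
  proof (intro allI impI)
    fix x :: 'a assume x0: "x \<noteq> 0"
    define nx where "nx = norm x"
    have nxpos: "nx > 0" using x0 nx_def by simp
    define q where "q = N x - nx"
    have qpos: "q > 0"
    proof -
      obtain l where "l \<in> L" "norm x < \<bar>h l x\<bar>" using att[OF x0] by blast
      then show ?thesis using Nup[of l x] unfolding q_def nx_def by linarith
    qed
    define \<tau> where "\<tau> = min 1 (q / (8 * nx))"
    have tpos: "\<tau> > 0" and t1: "\<tau> \<le> 1" and tq: "\<tau> * nx \<le> q / 8"
      using qpos nxpos unfolding \<tau>_def by (auto simp: min_def field_simps)
    define TI where "TI = {i\<in>I. 1 + \<tau>/5 \<le> C i}"
    define TJ where "TJ = {j\<in>J. \<tau>/3 \<le> eps j}"
    have fTI: "finite TI"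
    proof (cases "finite I")
      case True then show ?thesis unfolding TI_def by simp
    next
      case False
      then have "finite {i\<in>I. C i \<ge> 1 + \<tau>/5}" using C_lim tpos by simp
      then show ?thesis unfolding TI_def by simp
    qed
    have fTJ: "finite TJ"
    proof (cases "finite J")
      case True then show ?thesis unfolding TJ_def by simp
    next
      case False
      then have "\<forall>e>0. finite {j\<in>J. eps j \<ge> e}" using eps_lim by blast
      moreover have "\<tau>/3 > 0" using tpos by simp
      ultimately have "finite {j\<in>J. eps j \<ge> \<tau>/3}" by blast
      then show ?thesis unfolding TJ_def by simp
    qed
    define \<delta> where "\<delta> i = N x - C i * p i x" for i
    have dpos: "\<delta> i > 0" if iI: "i \<in> I" for i
    proof -
      obtain m where m: "\<bar>dd i m (restr (Kn i) x)\<bar> = p i x" using F2[OF iI] by blast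
      have w1: "C i < w i m" "1 < C i" using w_gt[OF iI, of m] C_range iI by auto
      have p0: "0 \<le> p i x" using F1[OF iI, of m x] by simp
      have "Inl (i, m) \<in> L" unfolding L_def using iI by auto
      then have "\<bar>h (Inl (i, m)) x\<bar> \<le> N x" by (rule Nup)
      then have wp: "w i m * p i x \<le> N x" unfolding hInl abs_mult m using w1 by simp
      show ?thesis
      proof (cases "p i x = 0")
        case True then show ?thesis unfolding \<delta>_def using qpos nxpos q_def by simp
      next
        case False
        then have "C i * p i x < w i m * p i x" using p0 w1 by (intro mult_strict_right_mono) auto
        then show ?thesis unfolding \<delta>_def using wp by simp
      qed
    qed
    define \<beta> where "\<beta> = Min (insert (q/2) ((\<lambda>i. \<delta> i / 2) ` TI))"
    have bpos: "\<beta> > 0" unfolding \<beta>_def using fTI qpos dpos TI_def by (subst Min_gr_iff) auto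
    have bq: "\<beta> \<le> q/2" unfolding \<beta>_def using fTI by (intro Min_le) auto
    have bd: "\<beta> \<le> \<delta> i / 2" if "i \<in> TI" for i unfolding \<beta>_def using fTI that by (intro Min_le) auto
    obtain m0 where m0: "(1/2::real) ^ m0 < \<beta> / (8 * nx)"
      using real_arch_pow_inv[of "\<beta> / (8 * nx)" "1/2::real"] bpos nxpos by auto
    define r where "r = \<beta> / (32 * (M + 1))"
    have rpos: "r > 0" unfolding r_def using bpos Mpos by simp
    have rb: "r \<le> \<beta> / 32" unfolding r_def using bpos Mpos by (simp add: field_simps)
    have Mr: "M * r \<le> \<beta> / 32" unfolding r_def using bpos Mpos by (simp add: field_simps)
    define F where "F = Inl ` (TI \<times> {..<m0}) \<union> Inr ` (SIGMA j:TJ. AA j)"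
    have fF: "finite F"
    proof -
      have "finite (SIGMA j:TJ. AA j)" using fTJ AA TJ_def by (intro finite_SigmaI) auto
      then show ?thesis unfolding F_def using fTI by simp
    qed
    show "\<exists>r>0. \<exists>F. finite F \<and> (\<forall>y\<in>ball x r. \<exists>c < N y. \<forall>l\<in>L-F. \<bar>h l y\<bar> \<le> c)"
    proof (rule exI[of _ r], intro conjI exI[of _ F] ballI)
      show "r > 0" by (rule rpos)
      show "finite F" by (rule fF)
      fix y assume y: "y \<in> ball x r"
      have dxy: "norm (y - x) < r" using y by (simp add: dist_norm norm_minus_commute)
      have ny: "norm y \<le> nx + r" using dxy norm_triangle_ineq2[of y x] unfolding nx_def by linarith
      have "N x \<le> N y + M * norm (x - y)" by (rule Nlip)
      also have "\<dots> \<le> N y + M * r" using dxy Mpos by (simp add: norm_minus_commute)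
      finally have Nyx: "N x - \<beta> / 32 \<le> N y" using Mr by linarith
      have tail: "(1 + \<tau>) * norm y \<le> N x - \<beta>"
      proof -
        have "(1 + \<tau>) * norm y \<le> (1 + \<tau>) * (nx + r)" using ny tpos by (intro mult_left_mono) auto
        also have "\<dots> = nx + \<tau> * nx + r + \<tau> * r" by (simp add: algebra_simps)
        also have "\<dots> \<le> nx + q/8 + r + r" using tq t1 rpos by (intro add_mono) auto
        also have "\<dots> \<le> N x - \<beta>" using rb bq q_def qpos by linarith
        finally show ?thesis .
      qed
      show "\<exists>c < N y. \<forall>l\<in>L-F. \<bar>h l y\<bar> \<le> c"
      proof (intro exI[of _ "N x - \<beta>"] conjI ballI)
        show "N x - \<beta> < N y" using Nyx bpos by linarith
        fix l assume l: "l \<in> L - F"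
        then consider (A) i m where "l = Inl (i, m)" "i \<in> I" | (B) j a where "l = Inr (j, a)" "j \<in> J" "a \<in> AA j"
          unfolding L_def by auto
        then show "\<bar>h l y\<bar> \<le> N x - \<beta>"
        proof cases
          case A
          have c: "1 < C i" "C i < 2" using C_range A(2) by auto
          have wg: "C i < w i m" and wl: "w i m \<le> 2 * C i - 1" using w_gt[OF A(2)] w_le[OF A(2)] by auto
          have hy: "\<bar>h l y\<bar> = w i m * \<bar>dd i m (restr (Kn i) y)\<bar>" unfolding A(1) hInl abs_mult
            using wg c by simp
          show ?thesis
          proof (cases "i \<in> TI")
            case True
            then have mm: "m0 \<le> m" using l A unfolding F_def by auto
            have "dd i m (restr (Kn i) y) = dd i m (restr (Kn i) x) + dd i m (restr (Kn i) (y - x))"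
              using linear_diff[OF F4[OF A(2), of m], of y x] by simp
            then have "\<bar>dd i m (restr (Kn i) y)\<bar> \<le> \<bar>dd i m (restr (Kn i) x)\<bar> + \<bar>dd i m (restr (Kn i) (y - x))\<bar>"
              by simp
            also have "\<dots> \<le> p i x + C i * r"
            proof -
              have "C i * norm (y - x) \<le> C i * r" using dxy c by (intro mult_left_mono) auto
              then show ?thesis using F1[OF A(2), of m x] F1[OF A(2), of m "y - x"]
                F3b[OF A(2), of "y - x"] by linarith
            qed
            finally have dy: "\<bar>dd i m (restr (Kn i) y)\<bar> \<le> p i x + C i * r" .
            have p0: "0 \<le> p i x" using F1[OF A(2), of m x] by simp
            have px: "p i x \<le> 2 * nx"
            proof -
              have "C i * nx \<le> 2 * nx" using c nxpos by (intro mult_right_mono) auto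
              then show ?thesis using F3b[OF A(2), of x] unfolding nx_def by linarith
            qed
            have pw: "(1/2::real) ^ m \<le> (1/2) ^ m0" using mm by (intro power_decreasing) auto
            have "(C i - 1) * (1/2::real) ^ m * p i x \<le> 1 * (1/2) ^ m0 * (2 * nx)"
              using c pw p0 px by (intro mult_mono) auto
            also have "\<dots> \<le> \<beta> / 4" using m0 nxpos by (simp add: field_simps)
            finally have t1': "(C i - 1) * (1/2::real) ^ m * p i x \<le> \<beta> / 4" .
            have "w i m * C i \<le> 8" by (rule wC8[OF A(2)])
            then have t2: "w i m * C i * r \<le> 8 * r" using rpos by (intro mult_right_mono) auto
            have "\<bar>h l y\<bar> \<le> w i m * (p i x + C i * r)" unfolding hy using dy wg c
              by (intro mult_left_mono) auto
            also have "\<dots> = C i * p i x + (C i - 1) * (1/2::real) ^ m * p i x + w i m * C i * r"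
              unfolding w_def by (simp add: algebra_simps)
            also have "\<dots> \<le> C i * p i x + \<beta> / 4 + 8 * r" using t1' t2 by linarith
            also have "\<dots> \<le> N x - \<beta>"
            proof -
              have "2 * \<beta> \<le> N x - C i * p i x" using bd[OF True] unfolding \<delta>_def by (simp add: field_simps)
              then show ?thesis using rb bpos by linarith
            qed
            finally show ?thesis .
          next
            case False
            then have cs: "C i < 1 + \<tau>/5" using A(2) unfolding TI_def by auto
            have "w i m * C i \<le> (2 * C i - 1) * C i" using wl c by (intro mult_right_mono) auto
            also have "\<dots> = 1 + (2 * C i + 1) * (C i - 1)" by (simp add: algebra_simps)
            also have "\<dots> \<le> 1 + 5 * (C i - 1)" using c by (intro add_left_mono mult_right_mono) auto
            also have "\<dots> \<le> 1 + \<tau>" using cs by simp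
            finally have wc: "w i m * C i \<le> 1 + \<tau>" .
            have "\<bar>h l y\<bar> \<le> w i m * (C i * norm y)" unfolding hy using F1[OF A(2), of m y] F3b[OF A(2), of y] wg c
              by (intro mult_left_mono) auto
            also have "\<dots> = (w i m * C i) * norm y" by simp
            also have "\<dots> \<le> (1 + \<tau>) * norm y" using wc by (intro mult_right_mono) auto
            also have "\<dots> \<le> N x - \<beta>" by (rule tail)
            finally show ?thesis .
          qed
        next
          case B
          have e: "0 < eps j" "eps j < 1" using eps_range B(2) by auto
          have "j \<notin> TJ" using l B unfolding F_def by auto
          then have es: "eps j < \<tau>/3" using B(2) unfolding TJ_def by auto
          have rat: "(1 + eps j) / (1 - eps j) \<le> 1 + \<tau>"
          proof -
            have "1 + eps j \<le> (1 + \<tau>) * (1 - eps j)"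
            proof -
              have "eps j * (2 + \<tau>) \<le> (\<tau>/3) * 3" using es e t1 tpos by (intro mult_mono) auto
              then show ?thesis by (simp add: algebra_simps)
            qed
            then show ?thesis using e by (simp add: divide_le_eq)
          qed
          have rpos': "(1 + eps j) / (1 - eps j) > 0" using e by auto
          have "\<bar>h l y\<bar> = (1 + eps j) / (1 - eps j) * \<bar>a y\<bar>"
            unfolding B(1) hInr abs_mult using abs_of_pos[OF rpos'] by metis
          also have "\<dots> \<le> (1 + \<tau>) * norm y" using rat Kbd AAK[OF B(2,3)] rpos'
            by (intro mult_mono) auto
          also have "\<dots> \<le> N x - \<beta>" by (rule tail)
          finally show ?thesis .
        qed
      qed
    qed
  qed
  show ?thesis
    using abstract_poly[OF Lne lin Mpos Mb] low loc unfolding N_def by blast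
qed


end
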